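(* Let $\{b_1,\dots,b_n\}$ and $\{a_1,\dots,a_n\}$ be two bases of an $n$-dimensional vector space $V$ and let $i\in\{1,\dots,n-1\}$. Then there exists a bijection $\phi$ from the set of $i$-element subsets of $\{1,\dots,n\}$ to the set of $(n-i)$-element subsets of $\{1,\dots,n\}$ such that for every $i$-element subset $I$, the set $\{b_k:k\in I\}\cup\{a_j:j\in\phi(I)\}$ is a basis of $V$. *)

theory Defs
  imports Complex_Main
begin

end

theory Submission
  imports Defs
begin

context vector_space begin

lemma swap_span:
  assumes "x \<in> span (insert y X)" "x \<notin> span X"
  shows "span (insert x X) = span (insert y X)"
proof -
  have y: "y \<in> span (insert x X)" using in_span_insert[OF assms] .
  have "span (insert x X) = span (insert y (insert x X))"
    using span_redundant[OF y] by simp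
  also have "\<dots> = span (insert x (insert y X))" by (simp add: insert_commute)
  also have "\<dots> = span (insert y X)" using span_redundant[OF assms(1)] .
  finally show ?thesis .
qed

lemma span_inter_lemma:
  assumes Y: "independent Y" and fT: "finite T" and TY: "T \<subseteq> Y"
    and v: "v \<in> span Y" and h: "\<forall>y\<in>T. v \<in> span (Y - {y})"
  shows "v \<in> span (Y - T)"
  using fT TY h
proof (induction T rule: finite_induct)
  case empty
  then show ?case using v by simp
next
  case (insert y T)
  have IH: "v \<in> span (Y - T)" using insert by auto
  have vy: "v \<in> span (Y - {y})" using insert by auto
  have yY: "y \<in> Y" using insert by auto
  show ?case
  proof (rule ccontr)
    assume nv: "v \<notin> span (Y - insert y T)"
    have eq: "Y - T = insert y (Y - insert y T)" using yY insert(2) by auto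
    have v2: "v \<in> span (insert y (Y - insert y T))" using IH unfolding eq .
    have "y \<in> span (insert v (Y - insert y T))"
      by (rule in_span_insert[OF v2 nv])
    also have "\<dots> \<subseteq> span (span (Y - {y}))"
    proof (rule span_mono)
      have "Y - insert y T \<subseteq> Y - {y}" by blast
      then have "Y - insert y T \<subseteq> span (Y - {y})" using span_superset[of "Y - {y}"] by (rule subset_trans)
      then show "insert v (Y - insert y T) \<subseteq> span (Y - {y})" using vy by (rule insert_subsetI[rotated])
    qed
    also have "\<dots> = span (Y - {y})" by (rule span_span)
    finally have "y \<in> span (Y - {y})" .
    then have "dependent Y" using yY unfolding dependent_def by blast
    then show False using Y by simp
  qed
qed

lemma exch:
  assumes fA: "finite IA" and k: "k \<in> IB"
    and ib: "inj_on b IB" and ia: "inj_on a IA"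
    and db: "C \<inter> b ` IB = {}" and da: "C \<inter> a ` IA = {}"
    and indb: "independent (C \<union> b ` IB)" and inda: "independent (C \<union> a ` IA)"
    and sp: "span (C \<union> a ` IA) = span (C \<union> b ` IB)"
  shows "\<exists>j\<in>IA. a j \<notin> span (C \<union> b ` (IB - {k})) \<and> b k \<notin> span (C \<union> a ` (IA - {j}))"
proof (rule ccontr)
  assume H: "\<not> ?thesis"
  define B' where "B' = C \<union> b ` (IB - {k})"
  define S where "S = {j\<in>IA. a j \<notin> span B'}"
  define Y where "Y = C \<union> a ` IA"
  have hS: "\<forall>j\<in>S. b k \<in> span (C \<union> a ` (IA - {j}))" using H unfolding S_def B'_def by blast
  have "\<forall>y\<in>a ` S. b k \<in> span (Y - {y})"
  proof
    fix y assume "y \<in> a ` S"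
    then obtain j where j: "j \<in> S" "y = a j" by auto
    have "Y - {y} = C \<union> a ` (IA - {j})"
      using j da ia unfolding Y_def S_def inj_on_def by auto
    then show "b k \<in> span (Y - {y})" using hS j by simp
  qed
  moreover have "b k \<in> span Y" unfolding Y_def sp using k by (intro span_base) auto
  moreover have "finite (a ` S)" using fA unfolding S_def by auto
  moreover have "a ` S \<subseteq> Y" unfolding Y_def S_def by auto
  ultimately have "b k \<in> span (Y - a ` S)"
    using span_inter_lemma[OF _ _ _ _] inda unfolding Y_def by blast
  also have "span (Y - a ` S) \<subseteq> span (span B')"
  proof (rule span_mono, rule subsetI)
    fix x assume x: "x \<in> Y - a ` S"
    show "x \<in> span B'"
    proof (cases "x \<in> C")
      case True then show ?thesis unfolding B'_def by (intro span_base) auto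
    next
      case False
      then obtain j where "j \<in> IA" "x = a j" using x unfolding Y_def by auto
      then show ?thesis using x unfolding S_def by auto
    qed
  qed
  also have "\<dots> = span B'" by (rule span_span)
  also have "\<dots> \<subseteq> span ((C \<union> b ` IB) - {b k})"
    by (rule span_mono) (use db ib k in \<open>auto simp: B'_def inj_on_def\<close>)
  finally have "b k \<in> span ((C \<union> b ` IB) - {b k})" .
  then have "dependent (C \<union> b ` IB)" unfolding dependent_def using k by blast
  then show False using indb by simp
qed

end



lemma bij_insert_sub:
  assumes "finite X" "k \<in> X"
  shows "bij_betw (insert k) {I. I \<subseteq> X - {k} \<and> card I = r} {I. I \<subseteq> X \<and> card I = Suc r \<and> k \<in> I}"
proof (rule bij_betw_byWitness[where f'="\<lambda>I. I - {k}"])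
  show "\<forall>a\<in>{I. I \<subseteq> X - {k} \<and> card I = r}. insert k a - {k} = a" by auto
  show "\<forall>a'\<in>{I. I \<subseteq> X \<and> card I = Suc r \<and> k \<in> I}. insert k (a' - {k}) = a'" by auto
  show "insert k ` {I. I \<subseteq> X - {k} \<and> card I = r} \<subseteq> {I. I \<subseteq> X \<and> card I = Suc r \<and> k \<in> I}"
    using assms by (auto intro!: card_insert_disjoint intro: finite_subset[of _ X])
  show "(\<lambda>I. I - {k}) ` {I. I \<subseteq> X \<and> card I = Suc r \<and> k \<in> I} \<subseteq> {I. I \<subseteq> X - {k} \<and> card I = r}"
    using assms by (auto dest: finite_subset)
qed

lemma bij_remove_sub:
  assumes "finite X" "k \<in> X"
  shows "bij_betw (\<lambda>I. I - {k}) {I. I \<subseteq> X \<and> card I = Suc r \<and> k \<in> I} {I. I \<subseteq> X - {k} \<and> card I = r}"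
proof (rule bij_betw_byWitness[where f'="insert k"])
  show "\<forall>a\<in>{I. I \<subseteq> X \<and> card I = Suc r \<and> k \<in> I}. insert k (a - {k}) = a" by auto
  show "\<forall>a'\<in>{I. I \<subseteq> X - {k} \<and> card I = r}. insert k a' - {k} = a'" by auto
  show "insert k ` {I. I \<subseteq> X - {k} \<and> card I = r} \<subseteq> {I. I \<subseteq> X \<and> card I = Suc r \<and> k \<in> I}"
    using assms by (auto intro!: card_insert_disjoint intro: finite_subset[of _ X])
  show "(\<lambda>I. I - {k}) ` {I. I \<subseteq> X \<and> card I = Suc r \<and> k \<in> I} \<subseteq> {I. I \<subseteq> X - {k} \<and> card I = r}"
    using assms by (auto dest: finite_subset)
qed

context vector_space begin

lemma gen:
  "\<And>IB IA C i. finite IB \<Longrightarrow> finite IA \<Longrightarrow> card IB = m \<Longrightarrow> card IA = m \<Longrightarrow> i \<le> m \<Longrightarrow>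
   inj_on b IB \<Longrightarrow> inj_on a IA \<Longrightarrow> C \<inter> b ` IB = {} \<Longrightarrow> C \<inter> a ` IA = {} \<Longrightarrow>
   independent (C \<union> b ` IB) \<Longrightarrow> independent (C \<union> a ` IA) \<Longrightarrow>
   span (C \<union> a ` IA) = span (C \<union> b ` IB) \<Longrightarrow>
   \<exists>\<phi>. bij_betw \<phi> {I. I \<subseteq> IB \<and> card I = i} {J. J \<subseteq> IA \<and> card J = m - i}
     \<and> (\<forall>I. I \<subseteq> IB \<and> card I = i \<longrightarrow> independent (C \<union> b ` I \<union> a ` \<phi> I)
          \<and> span (C \<union> b ` I \<union> a ` \<phi> I) = span (C \<union> b ` IB))"
proof (induction m)
  case 0
  fix IB IA C and i :: nat
  assume fB: "finite IB" and fA: "finite IA" and cB: "card IB = 0" and cA: "card IA = 0"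
    and i: "i \<le> 0" and ib: "inj_on b IB" and ia: "inj_on a IA"
    and db: "C \<inter> b ` IB = {}" and da: "C \<inter> a ` IA = {}"
    and indb: "independent (C \<union> b ` IB)" and inda: "independent (C \<union> a ` IA)"
    and sp: "span (C \<union> a ` IA) = span (C \<union> b ` IB)"
  have [simp]: "IB = {}" "IA = {}" "i = 0" using fB fA cB cA i by auto
  have e: "{I. I = {} \<and> card I = 0} = {{}}" by auto
  show "\<exists>\<phi>. bij_betw \<phi> {I. I \<subseteq> IB \<and> card I = i} {J. J \<subseteq> IA \<and> card J = 0 - i}
     \<and> (\<forall>I. I \<subseteq> IB \<and> card I = i \<longrightarrow> independent (C \<union> b ` I \<union> a ` \<phi> I)
          \<and> span (C \<union> b ` I \<union> a ` \<phi> I) = span (C \<union> b ` IB))"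
    by (rule exI[of _ "\<lambda>_. {}"]) (use indb in \<open>simp add: e bij_betw_def\<close>)
next
  case (Suc m)
  fix IB IA C and i :: nat
  assume fB: "finite IB" and fA: "finite IA" and cB: "card IB = Suc m" and cA: "card IA = Suc m"
    and i: "i \<le> Suc m" and ib: "inj_on b IB" and ia: "inj_on a IA"
    and db: "C \<inter> b ` IB = {}" and da: "C \<inter> a ` IA = {}"
    and indb: "independent (C \<union> b ` IB)" and inda: "independent (C \<union> a ` IA)"
    and sp: "span (C \<union> a ` IA) = span (C \<union> b ` IB)"
  obtain k where k: "k \<in> IB" using cB by fastforce
  obtain j0 where j0: "j0 \<in> IA" and h1: "a j0 \<notin> span (C \<union> b ` (IB - {k}))"
    and h2: "b k \<notin> span (C \<union> a ` (IA - {j0}))"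
    using exch[OF fA k ib ia db da indb inda sp] by blast
  define U where "U = span (C \<union> b ` IB)"
  define IB' where "IB' = IB - {k}"
  define IA' where "IA' = IA - {j0}"
  have fB': "finite IB'" "card IB' = m" using fB cB k unfolding IB'_def by auto
  have fA': "finite IA'" "card IA' = m" using fA cA j0 unfolding IA'_def by auto
  have ib': "inj_on b IB'" using ib unfolding IB'_def by (auto simp: inj_on_def)
  have ia': "inj_on a IA'" using ia unfolding IA'_def by (auto simp: inj_on_def)
  have setB: "insert (b k) C \<union> b ` IB' = C \<union> b ` IB" using k unfolding IB'_def by auto
  have setA: "insert (a j0) C \<union> a ` IA' = C \<union> a ` IA" using j0 unfolding IA'_def by auto
  have e1: "insert (a j0) (C \<union> a ` IA') = C \<union> a ` IA" using setA by simp
  have e2: "insert (b k) (C \<union> b ` IB') = C \<union> b ` IB" using setB by simp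
  have nbk: "b k \<notin> C \<union> a ` IA'" using h2 span_base[of "b k" "C \<union> a ` IA'"] unfolding IA'_def by blast
  have naj: "a j0 \<notin> C \<union> b ` IB'" using h1 span_base[of "a j0" "C \<union> b ` IB'"] unfolding IB'_def by blast
  have h1': "a j0 \<notin> span (C \<union> b ` IB')" using h1 unfolding IB'_def .
  have h2': "b k \<notin> span (C \<union> a ` IA')" using h2 unfolding IA'_def .
  have bkU: "b k \<in> U" unfolding U_def using k by (intro span_base) auto
  have ajU: "a j0 \<in> U" unfolding U_def sp[symmetric] using j0 by (intro span_base) auto
  have sw1: "span (insert (b k) (C \<union> a ` IA')) = U"
  proof -
    have "b k \<in> span (insert (a j0) (C \<union> a ` IA'))" unfolding e1 sp using bkU by (simp add: U_def)
    then have "span (insert (b k) (C \<union> a ` IA')) = span (insert (a j0) (C \<union> a ` IA'))"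
      by (rule swap_span) (rule h2')
    then show ?thesis unfolding e1 sp U_def .
  qed
  have sw2: "span (insert (a j0) (C \<union> b ` IB')) = U"
  proof -
    have "a j0 \<in> span (insert (b k) (C \<union> b ` IB'))" unfolding e2 using ajU by (simp add: U_def)
    then have "span (insert (a j0) (C \<union> b ` IB')) = span (insert (b k) (C \<union> b ` IB'))"
      by (rule swap_span) (rule h1')
    then show ?thesis unfolding e2 U_def .
  qed
  have "\<exists>\<phi>1. 1 \<le> i \<longrightarrow> bij_betw \<phi>1 {I. I \<subseteq> IB' \<and> card I = i - 1} {J. J \<subseteq> IA' \<and> card J = m - (i - 1)}
     \<and> (\<forall>I. I \<subseteq> IB' \<and> card I = i - 1 \<longrightarrow> independent (insert (b k) C \<union> b ` I \<union> a ` \<phi>1 I)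
          \<and> span (insert (b k) C \<union> b ` I \<union> a ` \<phi>1 I) = span (insert (b k) C \<union> b ` IB'))"
  proof (cases "1 \<le> i")
    case True
    have d1: "insert (b k) C \<inter> b ` IB' = {}" using db ib k unfolding IB'_def inj_on_def by auto
    have d2: "insert (b k) C \<inter> a ` IA' = {}"
      using da nbk unfolding IA'_def by auto
    have i1: "independent (insert (b k) C \<union> b ` IB')" using setB indb by simp
    have "independent (C \<union> a ` (IA - {j0}))" by (rule independent_mono[OF inda]) auto
    then have "independent (insert (b k) (C \<union> a ` (IA - {j0})))" by (rule independent_insertI[OF h2])
    then have i2: "independent (insert (b k) C \<union> a ` IA')" by (simp add: IA'_def)
    have s: "span (insert (b k) C \<union> a ` IA') = span (insert (b k) C \<union> b ` IB')"
      using sw1 e2 by (simp add: U_def)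
    have ii: "i - 1 \<le> m" using True i by simp
    from Suc.IH[OF fB'(1) fA'(1) fB'(2) fA'(2) ii ib' ia' d1 d2 i1 i2 s] show ?thesis by blast
  qed auto
  then obtain \<phi>1 where P1: "1 \<le> i \<Longrightarrow> bij_betw \<phi>1 {I. I \<subseteq> IB' \<and> card I = i - 1} {J. J \<subseteq> IA' \<and> card J = m - (i - 1)}
     \<and> (\<forall>I. I \<subseteq> IB' \<and> card I = i - 1 \<longrightarrow> independent (insert (b k) C \<union> b ` I \<union> a ` \<phi>1 I)
          \<and> span (insert (b k) C \<union> b ` I \<union> a ` \<phi>1 I) = span (insert (b k) C \<union> b ` IB'))" by blast
  have "\<exists>\<phi>2. i \<le> m \<longrightarrow> bij_betw \<phi>2 {I. I \<subseteq> IB' \<and> card I = i} {J. J \<subseteq> IA' \<and> card J = m - i}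
     \<and> (\<forall>I. I \<subseteq> IB' \<and> card I = i \<longrightarrow> independent (insert (a j0) C \<union> b ` I \<union> a ` \<phi>2 I)
          \<and> span (insert (a j0) C \<union> b ` I \<union> a ` \<phi>2 I) = span (insert (a j0) C \<union> b ` IB'))"
  proof (cases "i \<le> m")
    case True
    have d1: "insert (a j0) C \<inter> b ` IB' = {}" using db naj unfolding IB'_def by auto
    have d2: "insert (a j0) C \<inter> a ` IA' = {}"
      using da ia j0 unfolding IA'_def inj_on_def by auto
    have i2: "independent (insert (a j0) C \<union> a ` IA')" using setA inda by simp
    have "independent (C \<union> b ` (IB - {k}))" by (rule independent_mono[OF indb]) auto
    then have "independent (insert (a j0) (C \<union> b ` (IB - {k})))" by (rule independent_insertI[OF h1])
    then have i1: "independent (insert (a j0) C \<union> b ` IB')" by (simp add: IB'_def)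
    have s: "span (insert (a j0) C \<union> a ` IA') = span (insert (a j0) C \<union> b ` IB')"
      using sw2 e1 sp by (simp add: U_def)
    from Suc.IH[OF fB'(1) fA'(1) fB'(2) fA'(2) True ib' ia' d1 d2 i1 i2 s] show ?thesis by blast
  qed auto
  then obtain \<phi>2 where P2: "i \<le> m \<Longrightarrow> bij_betw \<phi>2 {I. I \<subseteq> IB' \<and> card I = i} {J. J \<subseteq> IA' \<and> card J = m - i}
     \<and> (\<forall>I. I \<subseteq> IB' \<and> card I = i \<longrightarrow> independent (insert (a j0) C \<union> b ` I \<union> a ` \<phi>2 I)
          \<and> span (insert (a j0) C \<union> b ` I \<union> a ` \<phi>2 I) = span (insert (a j0) C \<union> b ` IB'))" by blast
  define \<phi> where "\<phi> I = (if k \<in> I then \<phi>1 (I - {k}) else insert j0 (\<phi>2 I))" for I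
  define D1 where "D1 = {I. I \<subseteq> IB \<and> card I = i \<and> k \<in> I}"
  define D2 where "D2 = {I. I \<subseteq> IB' \<and> card I = i}"
  define E1 where "E1 = {J. J \<subseteq> IA' \<and> card J = Suc m - i}"
  define E2 where "E2 = {J. J \<subseteq> IA \<and> card J = Suc m - i \<and> j0 \<in> J}"
  have b1: "bij_betw \<phi> D1 E1"
  proof (cases "1 \<le> i")
    case True
    then obtain r where r: "i = Suc r" by (cases i) auto
    have bj1: "bij_betw (\<lambda>I. I - {k}) D1 {I. I \<subseteq> IB' \<and> card I = r}"
      using bij_remove_sub[OF fB k, of r] r unfolding D1_def IB'_def by simp
    have mm: "m - (i - 1) = Suc m - i" "i - 1 = r" using r by simp_all
    have mm2: "Suc m - i = m - r" using r by simp
    have bj2: "bij_betw \<phi>1 {I. I \<subseteq> IB' \<and> card I = r} E1"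
      using conjunct1[OF P1[OF True]] unfolding mm E1_def mm2 .
    have bjc: "bij_betw (\<phi>1 \<circ> (\<lambda>I. I - {k})) D1 E1" by (rule bij_betw_trans[OF bj1 bj2])
    have cg: "\<And>I. I \<in> D1 \<Longrightarrow> (\<phi>1 \<circ> (\<lambda>I. I - {k})) I = \<phi> I"
      unfolding D1_def \<phi>_def by simp
    have "bij_betw (\<phi>1 \<circ> (\<lambda>I. I - {k})) D1 E1 = bij_betw \<phi> D1 E1" by (rule bij_betw_cong) (rule cg)
    then show ?thesis using bjc by (rule iffD1)
  next
    case False
    then have i0: "i = 0" by simp
    have "D1 = {}"
    proof (rule equals0I)
      fix I assume "I \<in> D1"
      then have "I \<subseteq> IB" "card I = 0" "k \<in> I" using i0 unfolding D1_def by auto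
      moreover have "finite I" using \<open>I \<subseteq> IB\<close> fB by (rule finite_subset)
      ultimately show False by simp
    qed
    moreover have "E1 = {}"
    proof (rule equals0I)
      fix J assume "J \<in> E1"
      then have "J \<subseteq> IA'" "card J = Suc m" using i0 unfolding E1_def by auto
      then show False using card_mono[OF fA'(1), of J] fA'(2) by simp
    qed
    ultimately show ?thesis by (simp add: bij_betw_def)
  qed
  have b2: "bij_betw \<phi> D2 E2"
  proof (cases "i \<le> m")
    case True
    have bj1: "bij_betw \<phi>2 D2 {J. J \<subseteq> IA' \<and> card J = m - i}"
      using conjunct1[OF P2[OF True]] unfolding D2_def .
    have mm: "Suc (m - i) = Suc m - i" using True by simp
    have bj2: "bij_betw (insert j0) {J. J \<subseteq> IA' \<and> card J = m - i} E2"
      using bij_insert_sub[OF fA j0, of "m - i"] unfolding mm E2_def IA'_def .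
    have bjc: "bij_betw (insert j0 \<circ> \<phi>2) D2 E2" by (rule bij_betw_trans[OF bj1 bj2])
    have cg: "\<And>I. I \<in> D2 \<Longrightarrow> (insert j0 \<circ> \<phi>2) I = \<phi> I"
      unfolding D2_def \<phi>_def IB'_def by auto
    have "bij_betw (insert j0 \<circ> \<phi>2) D2 E2 = bij_betw \<phi> D2 E2" by (rule bij_betw_cong) (rule cg)
    then show ?thesis using bjc by (rule iffD1)
  next
    case False
    then have ii: "i = Suc m" using i by simp
    have "D2 = {}"
    proof (rule equals0I)
      fix I assume "I \<in> D2"
      then have "I \<subseteq> IB'" "card I = Suc m" using ii unfolding D2_def by auto
      then show False using card_mono[OF fB'(1), of I] fB'(2) by simp
    qed
    moreover have "E2 = {}"
    proof (rule equals0I)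
      fix J assume "J \<in> E2"
      then have "J \<subseteq> IA" "card J = 0" "j0 \<in> J" using ii unfolding E2_def by auto
      moreover have "finite J" using \<open>J \<subseteq> IA\<close> fA by (rule finite_subset)
      ultimately show False by simp
    qed
    ultimately show ?thesis by (simp add: bij_betw_def)
  qed
  have DD: "{I. I \<subseteq> IB \<and> card I = i} = D1 \<union> D2" unfolding D1_def D2_def IB'_def by auto
  have EE: "{J. J \<subseteq> IA \<and> card J = Suc m - i} = E1 \<union> E2" unfolding E1_def E2_def IA'_def by auto
  have bij: "bij_betw \<phi> {I. I \<subseteq> IB \<and> card I = i} {J. J \<subseteq> IA \<and> card J = Suc m - i}"
    unfolding DD EE by (rule bij_betw_combine[OF b1 b2]) (auto simp: E1_def E2_def IA'_def)
  have propI: "independent (C \<union> b ` I \<union> a ` \<phi> I) \<and> span (C \<union> b ` I \<union> a ` \<phi> I) = span (C \<union> b ` IB)"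
    if I: "I \<subseteq> IB" "card I = i" for I
  proof (cases "k \<in> I")
    case True
    have fI: "finite I" using I(1) fB finite_subset by blast
    have i1: "1 \<le> i" using I(2) True fI by (cases "card I") auto
    have c: "I - {k} \<subseteq> IB'" "card (I - {k}) = i - 1"
      using I True fI unfolding IB'_def by auto
    have eq: "C \<union> b ` I \<union> a ` \<phi> I = insert (b k) C \<union> b ` (I - {k}) \<union> a ` \<phi>1 (I - {k})"
      using True unfolding \<phi>_def by auto
    have "independent (insert (b k) C \<union> b ` (I - {k}) \<union> a ` \<phi>1 (I - {k}))
          \<and> span (insert (b k) C \<union> b ` (I - {k}) \<union> a ` \<phi>1 (I - {k})) = span (insert (b k) C \<union> b ` IB')"
      using conjunct2[OF P1[OF i1]] c by blast
    then show ?thesis unfolding eq setB .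
  next
    case False
    have c: "I \<subseteq> IB'" "card I = i" using I False unfolding IB'_def by auto
    have im: "i \<le> m" using card_mono[OF fB'(1) c(1)] fB'(2) c(2) by simp
    have eq: "C \<union> b ` I \<union> a ` \<phi> I = insert (a j0) C \<union> b ` I \<union> a ` \<phi>2 I"
      using False unfolding \<phi>_def by auto
    have s2: "span (insert (a j0) C \<union> b ` IB') = span (C \<union> b ` IB)"
      using sw2 by (simp add: U_def)
    have "independent (insert (a j0) C \<union> b ` I \<union> a ` \<phi>2 I)
          \<and> span (insert (a j0) C \<union> b ` I \<union> a ` \<phi>2 I) = span (insert (a j0) C \<union> b ` IB')"
      using conjunct2[OF P2[OF im]] c by blast
    then show ?thesis unfolding eq s2 .
  qed
  show "\<exists>\<phi>. bij_betw \<phi> {I. I \<subseteq> IB \<and> card I = i} {J. J \<subseteq> IA \<and> card J = Suc m - i}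
     \<and> (\<forall>I. I \<subseteq> IB \<and> card I = i \<longrightarrow> independent (C \<union> b ` I \<union> a ` \<phi> I)
          \<and> span (C \<union> b ` I \<union> a ` \<phi> I) = span (C \<union> b ` IB))"
    using bij propI by blast
qed

end

theorem lemma2p2:
  fixes scale :: "'a::field \<Rightarrow> 'v::ab_group_add \<Rightarrow> 'v"
    and b a :: "nat \<Rightarrow> 'v"
    and n i :: nat
  assumes vs: "vector_space scale"
    and b_inj: "inj_on b {1..n}"
    and b_indep: "\<not> module.dependent scale (b ` {1..n})"
    and b_span: "module.span scale (b ` {1..n}) = UNIV"
    and a_inj: "inj_on a {1..n}"
    and a_indep: "\<not> module.dependent scale (a ` {1..n})"
    and a_span: "module.span scale (a ` {1..n}) = UNIV"
    and i_ge: "1 \<le> i" and i_lt: "i < n"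
  shows "\<exists>\<phi>. bij_betw \<phi> {I. I \<subseteq> {1..n} \<and> card I = i}
                        {J. J \<subseteq> {1..n} \<and> card J = n - i}
           \<and> (\<forall>I. I \<subseteq> {1..n} \<and> card I = i \<longrightarrow>
                 \<not> module.dependent scale (b ` I \<union> a ` \<phi> I)
               \<and> module.span scale (b ` I \<union> a ` \<phi> I) = UNIV)"
proof -
  interpret vector_space scale by (rule vs)
  have "\<exists>\<phi>. bij_betw \<phi> {I. I \<subseteq> {1..n} \<and> card I = i} {J. J \<subseteq> {1..n} \<and> card J = n - i}
     \<and> (\<forall>I. I \<subseteq> {1..n} \<and> card I = i \<longrightarrow> independent ({} \<union> b ` I \<union> a ` \<phi> I)
          \<and> span ({} \<union> b ` I \<union> a ` \<phi> I) = span ({} \<union> b ` {1..n}))"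
    by (rule gen[of "{1..n}" "{1..n}" n i b a "{}"]) (use assms in auto)
  then show ?thesis using b_span by simp
qed

end
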